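(* Let $\mathcal{P}$ be a poset with at least two elements that has the Unique Cover Twin Property. Then for every $n\ge 2$, $\lceil\log_2 n\rceil\le \mathrm{isat}(n,\mathcal{P})$.
   Context: In a poset $(P,\le)$, $y$ covers $x$ if $x<y$ and there is no $z$ with $x<z<y$. A poset $\mathcal{P}=(P,\le)$ has the Unique Cover Twin Property (UCTP) if for every $S\in P$ that has exactly one cover $T\in P$, there exists $S'\in P$ with $S'\ne S$ such that $T$ also covers $S'$. $\mathcal{B}_n$ denotes the Boolean lattice $(2^{[n]},\subseteq)$. A family $\mathcal{F}\subseteq 2^{[n]}$ (ordered by inclusion) is induced-$\mathcal{P}$-saturated if it contains no induced copy of $\mathcal{P}$ (an injection $f$ with $u\le v\iff f(u)\subseteq f(v)$) but every family $\mathcal{F}'$ with $\mathcal{F}\subsetneq\mathcal{F}'\subseteq 2^{[n]}$ contains one. $\mathrm{isat}(n,\mathcal{P})$ is the minimum size of an induced-$\mathcal{P}$-saturated family in $\mathcal{B}_n$ (equal to $2^n$ if $\mathcal{P}$ is not an induced subposet of $\mathcal{B}_n$). *)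

theory Defs
  imports Complex_Main
begin

definition covers :: "'a set \<Rightarrow> 'a rel \<Rightarrow> 'a \<Rightarrow> 'a \<Rightarrow> bool" where
  "covers P r y x \<longleftrightarrow> x \<in> P \<and> y \<in> P \<and> (x, y) \<in> r \<and> x \<noteq> y \<and>
     \<not> (\<exists>z\<in>P. (x, z) \<in> r \<and> z \<noteq> x \<and> (z, y) \<in> r \<and> z \<noteq> y)"

definition UCTP :: "'a set \<Rightarrow> 'a rel \<Rightarrow> bool" where
  "UCTP P r \<longleftrightarrow> (\<forall>S\<in>P. \<forall>T\<in>P.
     (covers P r T S \<and> (\<forall>T'\<in>P. covers P r T' S \<longrightarrow> T' = T)) \<longrightarrow>
     (\<exists>S'\<in>P. S' \<noteq> S \<and> covers P r T S'))"

definition induced_copy :: "'a set \<Rightarrow> 'a rel \<Rightarrow> 'b set set \<Rightarrow> bool" where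
  "induced_copy P r F \<longleftrightarrow> (\<exists>f. inj_on f P \<and> f ` P \<subseteq> F \<and>
     (\<forall>u\<in>P. \<forall>v\<in>P. (u, v) \<in> r \<longleftrightarrow> f u \<subseteq> f v))"

definition induced_sat :: "nat \<Rightarrow> 'a set \<Rightarrow> 'a rel \<Rightarrow> nat set set \<Rightarrow> bool" where
  "induced_sat n P r F \<longleftrightarrow> F \<subseteq> Pow {1..n} \<and> \<not> induced_copy P r F \<and>
     (\<forall>F'. F \<subset> F' \<and> F' \<subseteq> Pow {1..n} \<longrightarrow> induced_copy P r F')"

text \<open>isat: minimum size of an induced-saturated family. If P does not embed in B_n,
  the only saturated family is 2^[n] itself, giving the convention isat = 2^n.\<close>
definition isat :: "nat \<Rightarrow> 'a set \<Rightarrow> 'a rel \<Rightarrow> nat" where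
  "isat n P r = (LEAST k. \<exists>F. induced_sat n P r F \<and> card F = k)"

end

theory Submission
  imports Defs
begin

lemma twin_lemma:
  assumes U: "UCTP P r"
    and XF: "X \<notin> F" and AF: "A \<in> F"
    and cmp: "X \<subset> A \<or> A \<subset> X"
    and tw: "\<And>B. B \<in> F \<Longrightarrow> B \<noteq> A \<Longrightarrow> (B \<subseteq> X \<longleftrightarrow> B \<subseteq> A) \<and> (X \<subseteq> B \<longleftrightarrow> A \<subseteq> B)"
    and cp: "induced_copy P r (insert X F)"
  shows "induced_copy P r F"
proof -
  obtain f where inj: "inj_on f P" and img: "f ` P \<subseteq> insert X F"
    and rel: "\<forall>u\<in>P. \<forall>v\<in>P. (u, v) \<in> r \<longleftrightarrow> f u \<subseteq> f v"
    using cp unfolding induced_copy_def by blast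
  show ?thesis
  proof (cases "X \<in> f ` P")
    case False
    then have "f ` P \<subseteq> F" using img by blast
    then show ?thesis using inj rel unfolding induced_copy_def by blast
  next
    case True
    then obtain p where pP: "p \<in> P" and fp: "f p = X" by blast
    show ?thesis
    proof (cases "A \<in> f ` P")
      case False
      define g where "g = f(p := A)"
      have ginj: "inj_on g P"
        unfolding g_def inj_on_def
      proof (intro ballI impI)
        fix x y assume xy: "x \<in> P" "y \<in> P" "(f(p := A)) x = (f(p := A)) y"
        show "x = y"
        proof (cases "x = p"; cases "y = p")
          assume "x = p" "y \<noteq> p" then show ?thesis using xy False by (metis fun_upd_apply imageI)
        next
          assume "x \<noteq> p" "y = p" then show ?thesis using xy False by (metis fun_upd_apply imageI)
        next
          assume "x \<noteq> p" "y \<noteq> p" then show ?thesis using xy inj by (simp add: inj_on_def)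
        qed simp
      qed
      have gimg: "g ` P \<subseteq> F"
      proof
        fix y assume "y \<in> g ` P"
        then obtain x where x: "x \<in> P" "y = g x" by blast
        show "y \<in> F"
        proof (cases "x = p")
          case True then show ?thesis using x AF by (simp add: g_def)
        next
          case False
          then have "f x \<noteq> X" using fp inj x pP by (metis inj_on_def)
          then show ?thesis using x img False by (auto simp: g_def)
        qed
      qed
      have grel: "\<forall>u\<in>P. \<forall>v\<in>P. (u, v) \<in> r \<longleftrightarrow> g u \<subseteq> g v"
      proof (intro ballI)
        fix u v assume uv: "u \<in> P" "v \<in> P"
        have oth: "\<And>w. w \<in> P \<Longrightarrow> w \<noteq> p \<Longrightarrow> f w \<in> F \<and> f w \<noteq> A"
        proof -
          fix w assume w: "w \<in> P" "w \<noteq> p"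
          then have "f w \<noteq> X" using fp inj pP by (metis inj_on_def)
          then show "f w \<in> F \<and> f w \<noteq> A" using w img False by auto
        qed
        show "(u, v) \<in> r \<longleftrightarrow> g u \<subseteq> g v"
        proof (cases "u = p"; cases "v = p")
          assume "u = p" "v = p" then show ?thesis using rel uv by (simp add: g_def)
        next
          assume a: "u = p" "v \<noteq> p"
          then show ?thesis using rel uv tw[of "f v"] oth[of v] fp by (auto simp: g_def)
        next
          assume a: "u \<noteq> p" "v = p"
          then show ?thesis using rel uv tw[of "f u"] oth[of u] fp by (auto simp: g_def)
        next
          assume a: "u \<noteq> p" "v \<noteq> p"
          then show ?thesis using rel uv by (auto simp: g_def)
        qed
      qed
      show ?thesis using ginj gimg grel unfolding induced_copy_def by blast
    next
      case True
      then obtain q where qP: "q \<in> P" and fq: "f q = A" by blast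
      have pq: "p \<noteq> q" using fp fq XF AF by auto
      obtain s t where st: "s \<in> P" "t \<in> P" "f s \<subset> f t" "{s,t} = {p,q}"
        using cmp pP qP fp fq by (metis insert_commute)
      have oth: "\<And>z. z \<in> P \<Longrightarrow> z \<noteq> s \<Longrightarrow> z \<noteq> t \<Longrightarrow>
          (f z \<subseteq> f s \<longleftrightarrow> f z \<subseteq> f t) \<and> (f s \<subseteq> f z \<longleftrightarrow> f t \<subseteq> f z)"
      proof -
        fix z assume z: "z \<in> P" "z \<noteq> s" "z \<noteq> t"
        then have zpq: "z \<noteq> p" "z \<noteq> q" using st(4) by auto
        then have "f z \<noteq> X" "f z \<noteq> A" using fp fq inj pP qP z(1) by (metis inj_on_def)+
        then have "f z \<in> F" using img z by auto
        then have "(f z \<subseteq> X \<longleftrightarrow> f z \<subseteq> A) \<and> (X \<subseteq> f z \<longleftrightarrow> A \<subseteq> f z)"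
          using tw \<open>f z \<noteq> A\<close> by blast
        then show "(f z \<subseteq> f s \<longleftrightarrow> f z \<subseteq> f t) \<and> (f s \<subseteq> f z \<longleftrightarrow> f t \<subseteq> f z)"
          using st(4) fp fq pq by (auto simp: doubleton_eq_iff)
      qed
      have st_ne: "s \<noteq> t" using st by auto
      have st_r: "(s, t) \<in> r" using rel st by auto
      have cov: "covers P r t s"
        unfolding covers_def
      proof (intro conjI)
        show "\<not> (\<exists>z\<in>P. (s, z) \<in> r \<and> z \<noteq> s \<and> (z, t) \<in> r \<and> z \<noteq> t)"
        proof
          assume "\<exists>z\<in>P. (s, z) \<in> r \<and> z \<noteq> s \<and> (z, t) \<in> r \<and> z \<noteq> t"
          then obtain z where z: "z \<in> P" "(s, z) \<in> r" "z \<noteq> s" "(z, t) \<in> r" "z \<noteq> t" by blast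
          then have "f s \<subseteq> f z" "f z \<subseteq> f t" using rel st by auto
          then have "f z = f t" using oth[OF z(1) z(3) z(5)] by auto
          then show False using inj z st by (metis inj_on_def)
        qed
      qed (use st st_ne st_r in auto)
      have uniq: "\<forall>T'\<in>P. covers P r T' s \<longrightarrow> T' = t"
      proof (intro ballI impI)
        fix T' assume T': "T' \<in> P" "covers P r T' s"
        show "T' = t"
        proof (rule ccontr)
          assume ne: "T' \<noteq> t"
          have "(s, T') \<in> r" "T' \<noteq> s" using T' unfolding covers_def by auto
          then have "f s \<subseteq> f T'" using rel st T' by auto
          then have "f t \<subseteq> f T'" using oth[OF T'(1) \<open>T' \<noteq> s\<close> ne] by auto
          then have "(t, T') \<in> r" using rel st T' by auto
          then show False using T'(2) st st_ne st_r ne unfolding covers_def by blast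
        qed
      qed
      obtain S' where S': "S' \<in> P" "S' \<noteq> s" "covers P r t S'"
        using U st cov uniq unfolding UCTP_def by blast
      have "(S', t) \<in> r" "S' \<noteq> t" using S' unfolding covers_def by auto
      then have "f S' \<subseteq> f t" using rel S' st by auto
      then have "f S' \<subseteq> f s" using oth[OF S'(1) S'(2) \<open>S' \<noteq> t\<close>] by auto
      then have "(S', s) \<in> r" using rel S' st by auto
      then show ?thesis using S' st st_ne st_r unfolding covers_def by blast
    qed
  qed
qed

lemma main_bound:
  assumes U: "UCTP P r"
    and P2: "2 \<le> card P \<or> infinite P"
    and sat: "induced_sat n P r F"
  shows "n \<le> 2 ^ card F"
proof (rule ccontr)
  assume "\<not> n \<le> 2 ^ card F"
  then have lt: "2 ^ card F < n" by simp
  have FP: "F \<subseteq> Pow {1..n}" and nc: "\<not> induced_copy P r F"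
    and ext: "\<And>F'. F \<subset> F' \<Longrightarrow> F' \<subseteq> Pow {1..n} \<Longrightarrow> induced_copy P r F'"
    using sat unfolding induced_sat_def by auto
  have finF: "finite F" using FP finite_subset by blast
  define \<tau> where "\<tau> i = {A\<in>F. i \<in> A}" for i :: nat
  have "\<not> inj_on \<tau> {1..n}"
  proof
    assume "inj_on \<tau> {1..n}"
    moreover have "\<tau> ` {1..n} \<subseteq> Pow F" by (auto simp: \<tau>_def)
    ultimately have "card {1..n} \<le> card (Pow F)" using finF by (intro card_inj_on_le) auto
    then show False using lt finF by (simp add: card_Pow)
  qed
  then obtain i j where ij: "i \<in> {1..n}" "j \<in> {1..n}" "i \<noteq> j" "\<tau> i = \<tau> j"
    unfolding inj_on_def by blast
  have twin: "\<And>A. A \<in> F \<Longrightarrow> (i \<in> A \<longleftrightarrow> j \<in> A)"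
  proof -
    fix A assume "A \<in> F"
    have "A \<in> \<tau> i \<longleftrightarrow> A \<in> \<tau> j" using ij(4) by simp
    then show "i \<in> A \<longleftrightarrow> j \<in> A" using \<open>A \<in> F\<close> by (simp add: \<tau>_def)
  qed
  have key: "\<exists>X A. X \<notin> F \<and> X \<subseteq> {1..n} \<and> A \<in> F \<and> (X \<subset> A \<or> A \<subset> X) \<and>
     (\<forall>B. B \<in> F \<longrightarrow> B \<noteq> A \<longrightarrow> (B \<subseteq> X \<longleftrightarrow> B \<subseteq> A) \<and> (X \<subseteq> B \<longleftrightarrow> A \<subseteq> B))"
  proof (cases "\<exists>A\<in>F. i \<in> A")
    case True
    then obtain A0 where A0: "A0 \<in> {A\<in>F. i \<in> A}" by blast
    have finS: "finite {A\<in>F. i \<in> A}" using finF by simp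
    obtain A where A: "A \<in> {A\<in>F. i \<in> A}"
      and minA: "\<forall>b\<in>{A\<in>F. i \<in> A}. b \<le> A \<longrightarrow> A = b"
      using finite_has_minimal2[OF finS A0] by blast
    have AF: "A \<in> F" "i \<in> A" using A by auto
    have jA: "j \<in> A" using twin[OF AF(1)] AF(2) by blast
    define X where "X = A - {j}"
    have "X \<notin> F"
    proof
      assume "X \<in> F"
      moreover have "i \<in> X" "j \<notin> X" using AF ij(3) by (auto simp: X_def)
      ultimately show False using twin by blast
    qed
    moreover have "X \<subseteq> {1..n}" using FP AF by (auto simp: X_def)
    moreover have "X \<subset> A" using jA by (auto simp: X_def)
    moreover have "\<forall>B. B \<in> F \<longrightarrow> B \<noteq> A \<longrightarrow> (B \<subseteq> X \<longleftrightarrow> B \<subseteq> A) \<and> (X \<subseteq> B \<longleftrightarrow> A \<subseteq> B)"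
    proof (intro allI impI conjI iffI)
      fix B assume B: "B \<in> F" "B \<noteq> A"
      { assume "B \<subseteq> X" then show "B \<subseteq> A" by (auto simp: X_def) }
      { assume "B \<subseteq> A"
        then have "i \<notin> B" using minA B by blast
        then have "j \<notin> B" using twin[OF B(1)] by blast
        then show "B \<subseteq> X" using \<open>B \<subseteq> A\<close> by (auto simp: X_def) }
      { assume "X \<subseteq> B"
        then have "i \<in> B" using AF ij(3) by (auto simp: X_def)
        then have "j \<in> B" using twin[OF B(1)] by blast
        then show "A \<subseteq> B" using \<open>X \<subseteq> B\<close> by (auto simp: X_def) }
      { assume "A \<subseteq> B" then show "X \<subseteq> B" by (auto simp: X_def) }
    qed
    ultimately show ?thesis using AF(1) by (intro exI[of _ X] exI[of _ A]) simp
  next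
    case False
    have Fne: "F \<noteq> {}"
    proof
      assume "F = {}"
      then have h1: "F \<subset> {{}}" by auto
      have h2: "{{}} \<subseteq> Pow {1..n}" by auto
      have "induced_copy P r {{}::nat set}" by (rule ext[OF h1 h2])
      then obtain f where fi: "inj_on f P" "f ` P \<subseteq> {{}::nat set}" unfolding induced_copy_def by blast
      have "finite P" by (rule inj_on_finite[OF fi]) simp
      have "card P \<le> card {{}::nat set}" by (rule card_inj_on_le[OF fi]) simp
      then show False using P2 \<open>finite P\<close> by simp
    qed
    obtain A where AF: "A \<in> F" and maxA: "\<forall>b\<in>F. A \<le> b \<longrightarrow> A = b"
      using finite_has_maximal[OF finF Fne] by blast
    have iA: "i \<notin> A" using False AF by auto
    define X where "X = insert i A"
    have "X \<notin> F" using False by (auto simp: X_def)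
    moreover have "X \<subseteq> {1..n}" using FP AF ij by (auto simp: X_def)
    moreover have "A \<subset> X" using iA by (auto simp: X_def)
    moreover have "\<forall>B. B \<in> F \<longrightarrow> B \<noteq> A \<longrightarrow> (B \<subseteq> X \<longleftrightarrow> B \<subseteq> A) \<and> (X \<subseteq> B \<longleftrightarrow> A \<subseteq> B)"
    proof (intro allI impI conjI iffI)
      fix B assume B: "B \<in> F" "B \<noteq> A"
      { assume "B \<subseteq> X" then show "B \<subseteq> A" using False B by (auto simp: X_def) }
      { assume "B \<subseteq> A" then show "B \<subseteq> X" by (auto simp: X_def) }
      { assume "X \<subseteq> B" then show "A \<subseteq> B" by (auto simp: X_def) }
      { assume "A \<subseteq> B" then show "X \<subseteq> B" using maxA B by auto }
    qed
    ultimately show ?thesis using AF by blast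
  qed
  then obtain X A where X: "X \<notin> F" "X \<subseteq> {1..n}" "A \<in> F" "X \<subset> A \<or> A \<subset> X"
    and tw: "\<forall>B. B \<in> F \<longrightarrow> B \<noteq> A \<longrightarrow> (B \<subseteq> X \<longleftrightarrow> B \<subseteq> A) \<and> (X \<subseteq> B \<longleftrightarrow> A \<subseteq> B)"
    by blast
  have "induced_copy P r (insert X F)" by (rule ext) (use X FP in auto)
  then have "induced_copy P r F" using twin_lemma[OF U X(1) X(3) X(4)] tw by blast
  then show False using nc by simp
qed

lemma sat_exists:
  assumes P2: "2 \<le> card P \<or> infinite P"
  shows "\<exists>F. induced_sat n P r F"
proof -
  define S where "S = {G. G \<subseteq> Pow {1..n} \<and> \<not> induced_copy P r G}"
  have "finite S" unfolding S_def by (rule finite_subset[of _ "Pow (Pow {1..n})"]) auto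
  moreover have "{} \<in> S"
  proof -
    have "P \<noteq> {}" using P2 by auto
    then have "\<not> induced_copy P r {}" unfolding induced_copy_def by auto
    then show ?thesis unfolding S_def by auto
  qed
  ultimately obtain m where m: "m \<in> S" and mx: "\<forall>b\<in>S. m \<le> b \<longrightarrow> m = b"
    using finite_has_maximal by blast
  have "induced_sat n P r m"
    unfolding induced_sat_def
  proof (intro conjI allI impI)
    show "m \<subseteq> Pow {1..n}" "\<not> induced_copy P r m" using m unfolding S_def by auto
    fix F' assume F': "m \<subset> F' \<and> F' \<subseteq> Pow {1..n}"
    show "induced_copy P r F'"
    proof (rule ccontr)
      assume "\<not> induced_copy P r F'"
      then have "F' \<in> S" using F' unfolding S_def by auto
      then show False using mx F' by auto
    qed
  qed
  then show ?thesis by blast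
qed

theorem theorem1p9:
  fixes P :: "'a set" and r :: "'a rel" and n :: nat
  assumes "partial_order_on P r"
    and "2 \<le> card P \<or> infinite P"
    and "UCTP P r"
    and "2 \<le> n"
  shows "\<lceil>log 2 (real n)\<rceil> \<le> int (isat n P r)"
proof -
  obtain F0 where F0: "induced_sat n P r F0" using sat_exists[OF assms(2)] by blast
  have "\<exists>F. induced_sat n P r F \<and> card F = isat n P r"
    unfolding isat_def by (rule LeastI[where P = "\<lambda>k. \<exists>F. induced_sat n P r F \<and> card F = k" and k = "card F0"]) (use F0 in blast)
  then obtain F where F: "induced_sat n P r F" "card F = isat n P r" by blast
  have "n \<le> 2 ^ isat n P r" using main_bound[OF assms(3) assms(2) F(1)] F(2) by simp
  then have "real n \<le> 2 ^ isat n P r" by (metis of_nat_le_iff of_nat_numeral of_nat_power)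
  then have "log 2 (real n) \<le> log 2 (2 ^ isat n P r)" using assms(4) by (subst log_le_cancel_iff) auto
  also have "\<dots> = real (isat n P r)" by (simp add: log_nat_power)
  finally show ?thesis by (simp add: ceiling_le_iff)
qed

end
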